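(* Let $\Omega\subset\mathbb H^n$ be an open, horizontally bounded and (Euclidean) convex set. Then $$\mathcal D(\xi)\le\Bigl(\frac{\sqrt[4]{97}}{2}+\frac13\Bigr)\mathrm{dist}_H(\xi,\partial\Omega)\qquad\forall\xi\in\Omega,$$ where $\mathcal D(\xi)=\min\{\mathrm{dist}_H(\zeta,\partial\Omega\cap H_\zeta):\zeta\in\overline{B_H(\xi,\mathrm{dist}_H(\xi,\partial\Omega)/3)}\}$.
   Context: $\mathbb H^n=\mathbb C^n\times\mathbb R\cong\mathbb R^{2n+1}$ with real coordinates $(x,y,t)$, $z=x+iy$, group law $(z,t)\circ(z',t')=(z+z',t+t'+2\,\mathrm{Im}\langle z,z'\rangle)$, $\langle z,z'\rangle=\sum_j z_j\overline{z'_j}$. Horizontal plane at $\xi_0=(x_0,y_0,t_0)$: $H_{\xi_0}=\{(x,y,t):t=t_0+2(x\cdot y_0-x_0\cdot y)\}$. Gauge $N(z,t)=(|z|^4+t^2)^{1/4}$, $d_H(\xi,\zeta)=N(\zeta^{-1}\circ\xi)$, $B_H(\xi,r)=\{\zeta:d_H(\zeta,\xi)<r\}$, $\mathrm{dist}_H(\xi,A)=\inf_{\zeta\in A}d_H(\xi,\zeta)$, $\mathrm{diam}_H$ the $d_H$-diameter; $\Omega$ is horizontally bounded if $\sup\{\mathrm{diam}_H(\Omega\cap H_\xi):\xi\in\Omega\}<\infty$. *)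

theory Defs
  imports "HOL-Analysis.Analysis"
begin

text \<open>The Heisenberg group H^n = C^n x R; the index type 'n (finite) plays the role of {1..n}.
 A point is a pair (z, t) with z :: complex^'n, t :: real; x = Re z, y = Im z componentwise.\<close>

type_synonym 'n heis = "(complex^'n) \<times> real"

definition hinner :: "complex^'n::finite \<Rightarrow> complex^'n \<Rightarrow> complex" where
  "hinner z w = (\<Sum>j\<in>UNIV. z$j * cnj (w$j))"

definition hmult :: "'n::finite heis \<Rightarrow> 'n heis \<Rightarrow> 'n heis" where
  "hmult p q = (fst p + fst q, snd p + snd q + 2 * Im (hinner (fst p) (fst q)))"

definition hinv :: "'n::finite heis \<Rightarrow> 'n heis" where
  "hinv p = (- fst p, - snd p)"

definition gauge :: "'n::finite heis \<Rightarrow> real" where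
  "gauge p = (norm (fst p) ^ 4 + (snd p)^2) powr (1/4)"

definition dH :: "'n::finite heis \<Rightarrow> 'n heis \<Rightarrow> real" where
  "dH \<xi> \<zeta> = gauge (hmult (hinv \<zeta>) \<xi>)"

definition ballH :: "'n::finite heis \<Rightarrow> real \<Rightarrow> 'n heis set" where
  "ballH \<xi> r = {\<zeta>. dH \<zeta> \<xi> < r}"

definition distH :: "'n::finite heis \<Rightarrow> 'n heis set \<Rightarrow> real" where
  "distH \<xi> A = (INF \<zeta>\<in>A. dH \<xi> \<zeta>)"

definition hplane :: "'n::finite heis \<Rightarrow> 'n heis set" where
  "hplane \<xi>0 = {p. snd p = snd \<xi>0 + 2 * (\<Sum>j\<in>UNIV.
       Re (fst p $ j) * Im (fst \<xi>0 $ j) - Re (fst \<xi>0 $ j) * Im (fst p $ j))}"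

definition horiz_bounded :: "'n::finite heis set \<Rightarrow> bool" where
  "horiz_bounded \<Omega> \<longleftrightarrow> (\<exists>C. \<forall>\<xi>\<in>\<Omega>. \<forall>a\<in>\<Omega> \<inter> hplane \<xi>. \<forall>b\<in>\<Omega> \<inter> hplane \<xi>. dH a b \<le> C)"

definition Dfun :: "'n::finite heis set \<Rightarrow> 'n heis \<Rightarrow> real" where
  "Dfun \<Omega> \<xi> = (INF \<zeta>\<in>closure (ballH \<xi> (distH \<xi> (frontier \<Omega>) / 3)).
                   distH \<zeta> (frontier \<Omega> \<inter> hplane \<zeta>))"

end

theory Submission
  imports Defs
begin


definition J :: "complex^'n::finite \<Rightarrow> complex^'n" where
  "J z = (\<chi> j. - \<i> * z$j)"

lemma Im_hinner: "Im (hinner z w) = inner (J z) w"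
  unfolding hinner_def J_def inner_vec_def by (simp add: Im_sum inner_complex_def algebra_simps)

lemma J_add[simp]: "J (x + y) = J x + J y"
  unfolding J_def by (simp add: vec_eq_iff algebra_simps)
lemma J_scaleR[simp]: "J (r *\<^sub>R x) = r *\<^sub>R J x"
  unfolding J_def by (simp add: vec_eq_iff algebra_simps scaleR_conv_of_real)
lemma J_minus[simp]: "J (- x) = - J x"
  unfolding J_def by (simp add: vec_eq_iff)
lemma J_J[simp]: "J (J x) = - x"
  unfolding J_def by (simp add: vec_eq_iff)
lemma inner_J_self[simp]: "inner (J z) z = 0"
  unfolding J_def inner_vec_def by (simp add: inner_complex_def)
lemma inner_J_swap: "inner (J z) w = - inner (J w) z"
  unfolding J_def inner_vec_def by (simp add: inner_complex_def sum_negf[symmetric] algebra_simps)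
lemma inner_self_J[simp]: "inner z (J z) = 0"
  by (metis inner_J_self inner_commute)
lemma norm_J[simp]: "norm (J z) = norm z"
  unfolding J_def norm_vec_def L2_set_def by (simp add: norm_mult)

lemma hmult_alt: "hmult p q = (fst p + fst q, snd p + snd q + 2 * inner (J (fst p)) (fst q))"
  unfolding hmult_def Im_hinner ..



lemma hmult_cancel1[simp]: "hmult (hinv p) (hmult p v) = v"
  by (simp add: hmult_alt hinv_def inner_J_swap[of "fst p"] algebra_simps prod_eq_iff)
lemma hmult_cancel2[simp]: "hmult p (hmult (hinv p) q) = q"
  by (simp add: hmult_alt hinv_def inner_J_swap[of "fst p"] algebra_simps prod_eq_iff)
lemma gauge_hinv[simp]: "gauge (hinv v) = gauge v"
  by (simp add: gauge_def hinv_def)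
lemma hinv_hmult: "hinv (hmult (hinv q) p) = hmult (hinv p) q"
  by (simp add: hmult_alt hinv_def inner_J_swap[of "fst p"] algebra_simps prod_eq_iff)
lemma dH_sym: "dH p q = dH q p"
  unfolding dH_def by (metis gauge_hinv hinv_hmult)
lemma dH_left: "dH (hmult p v) p = gauge v"
  unfolding dH_def by simp
lemma gauge_nonneg: "gauge v \<ge> 0"
  unfolding gauge_def by simp
lemma gauge_horiz: "gauge (w, 0) = norm w"
proof -
  have "(norm w ^ 4) powr (1/4) = norm w"
  proof (cases "norm w = 0")
    case False
    then have "norm w ^ 4 = norm w powr (4::real)"
      using powr_realpow[of "norm w" 4] False by simp
    then have "(norm w ^ 4) powr (1/4) = (norm w powr (4::real)) powr (1/4)" by simp
    also have "\<dots> = norm w powr (4 * (1/4))" by (rule powr_powr)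
    also have "\<dots> = norm w" by simp
    finally show ?thesis .
  qed simp
  then show ?thesis by (simp add: gauge_def)
qed
lemma norm_le_gauge: "norm w \<le> gauge (w, t)"
proof -
  have "norm w = (norm w ^ 4) powr (1/4)" using gauge_horiz[of w] by (simp add: gauge_def)
  also have "\<dots> \<le> (norm w ^ 4 + t^2) powr (1/4)" by (intro powr_mono2) auto
  finally show ?thesis by (simp add: gauge_def)
qed
lemma abs_le_gauge2: "\<bar>t\<bar> \<le> gauge (w, t) ^ 2"
proof -
  have "gauge (w,t) ^ 2 = (norm w ^ 4 + t^2) powr (1/2)"
  proof (cases "norm w ^ 4 + t^2 = 0")
    case False
    then have p: "norm w ^ 4 + t^2 > 0" by (metis add_nonneg_nonneg norm_ge_zero zero_le_power zero_le_power2 order_le_less)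
    have "((norm w ^ 4 + t^2) powr (1/4)) ^ 2 = ((norm w ^ 4 + t^2) powr (1/4)) powr (2::real)"
      using powr_realpow[of "(norm w ^ 4 + t^2) powr (1/4)" 2] p by simp
    also have "\<dots> = (norm w ^ 4 + t^2) powr (1/4 * 2)" by (rule powr_powr)
    finally show ?thesis unfolding gauge_def by simp
  qed (simp add: gauge_def)
  also have "\<dots> = sqrt (norm w ^ 4 + t^2)" by (simp add: powr_half_sqrt)
  moreover have "\<bar>t\<bar> \<le> sqrt (norm w ^ 4 + t^2)"
    by (metis real_sqrt_abs real_sqrt_le_mono le_add_same_cancel2 norm_ge_zero zero_le_power)
  ultimately show ?thesis by simp
qed
lemma gauge_scale: assumes "0 \<le> l" "l \<le> 1" shows "gauge (l *\<^sub>R w, l * t) \<le> gauge (w, t)"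
proof -
  have "norm (l *\<^sub>R w) ^ 4 \<le> norm w ^ 4"
    using assms by (simp add: power_mult_distrib mult_left_le_one_le power_le_one)
  moreover have "(l * t)^2 \<le> t^2"
    using assms by (simp add: power_mult_distrib mult_left_le_one_le power_le_one)
  ultimately have "norm (l *\<^sub>R w) ^ 4 + (l * t)^2 \<le> norm w ^ 4 + t^2" by linarith
  then show ?thesis unfolding gauge_def fst_conv snd_conv by (intro powr_mono2) auto
qed
lemma hplane_horiz: "hmult p (w, 0) \<in> hplane p"
  unfolding hplane_def hmult_alt J_def inner_vec_def
  by (simp add: inner_complex_def sum_subtractf[symmetric] algebra_simps)



lemma exit_point:
  fixes \<gamma> :: "real \<Rightarrow> 'a::real_normed_vector"
  assumes "continuous_on {0..s} \<gamma>" "\<gamma> 0 \<in> \<Omega>" "\<gamma> s \<notin> \<Omega>" "0 \<le> s"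
  shows "\<exists>l\<in>{0..s}. \<gamma> l \<in> frontier \<Omega>"
proof -
  have "connected (\<gamma> ` {0..s})"
    by (rule connected_continuous_image[OF assms(1)]) simp
  moreover have "\<gamma> ` {0..s} \<inter> \<Omega> \<noteq> {}" using assms by force
  moreover have "\<gamma> ` {0..s} - \<Omega> \<noteq> {}" using assms by force
  ultimately have "\<gamma> ` {0..s} \<inter> frontier \<Omega> \<noteq> {}" by (rule connected_Int_frontier)
  then show ?thesis by blast
qed

lemma strict_sep:
  fixes c :: "'a::real_inner"
  assumes "open \<Omega>" "x \<in> \<Omega>" "c \<noteq> 0" "\<forall>y\<in>\<Omega>. inner c y \<le> b"
  shows "inner c x < b"
proof -
  obtain e where e: "e > 0" "ball x e \<subseteq> \<Omega>" using assms(1,2) open_contains_ball by blast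
  define y where "y = x + (e / 2 / norm c) *\<^sub>R c"
  have "dist x y = e/2" using assms(3) e by (simp add: y_def dist_norm)
  then have "y \<in> \<Omega>" using e by auto
  moreover have "inner c y = inner c x + e / 2 * norm c"
    using assms(3) by (simp add: y_def inner_add_right power2_norm_eq_inner[symmetric] power2_eq_square)
  moreover have "e / 2 * norm c > 0" using e assms(3) by simp
  ultimately show ?thesis using assms(4) by fastforce
qed

lemma hmult_zero_right[simp]: "hmult p (0, 0) = p"
  by (simp add: hmult_alt)

lemma ball_in:
  assumes "\<xi> \<in> \<Omega>" "p \<notin> \<Omega>"
  shows "\<exists>x\<in>frontier \<Omega>. dH \<xi> x \<le> dH p \<xi>"
proof -
  define v where "v = hmult (hinv \<xi>) p"
  define \<gamma> where "\<gamma> = (\<lambda>l::real. hmult \<xi> (l *\<^sub>R fst v, l * snd v))"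
  have "continuous_on {0..1} \<gamma>"
    unfolding \<gamma>_def hmult_alt by (intro continuous_intros)
  moreover have "\<gamma> 0 = \<xi>" by (simp add: \<gamma>_def)
  moreover have "\<gamma> 1 = p" by (simp add: \<gamma>_def v_def)
  ultimately obtain l where l: "l \<in> {0..1}" "\<gamma> l \<in> frontier \<Omega>"
    using exit_point[of 1 \<gamma> \<Omega>] assms by auto
  have "dH \<xi> (\<gamma> l) = gauge (l *\<^sub>R fst v, l * snd v)"
    by (simp add: dH_sym[of \<xi>] \<gamma>_def dH_left)
  also have "\<dots> \<le> gauge (fst v, snd v)" using l by (intro gauge_scale) auto
  also have "\<dots> = dH p \<xi>" by (simp add: v_def dH_def)
  finally show ?thesis using l by blast
qed

lemma dist_pos:
  assumes "open \<Omega>" "\<xi> \<in> \<Omega>" "frontier \<Omega> \<noteq> {}"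
  shows "distH \<xi> (frontier \<Omega>) > 0"
proof -
  have "\<xi> \<notin> frontier \<Omega>" using assms by (simp add: frontier_def interior_open)
  moreover have "closed (frontier \<Omega>)" by simp
  ultimately obtain e where e: "e > 0" "\<And>y. dist y \<xi> < e \<Longrightarrow> y \<notin> frontier \<Omega>"
    by (metis open_Compl open_dist ComplI ComplD)
  define z where "z = fst \<xi>"
  define r where "r = min 1 (e / (3 + 2 * norm z))"
  have r: "r > 0" "r \<le> 1" "r * (3 + 2 * norm z) \<le> e"
    using e by (auto simp: r_def min_def field_simps add_pos_nonneg)
  have "r \<le> dH \<xi> \<eta>" if "\<eta> \<in> frontier \<Omega>" for \<eta>
  proof (rule ccontr)
    assume "\<not> r \<le> dH \<xi> \<eta>"
    define v where "v = hmult (hinv \<xi>) \<eta>"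
    have "dH \<xi> \<eta> = gauge v" unfolding dH_sym[of \<xi> \<eta>] by (simp add: v_def dH_def)
    then have g: "gauge v < r" using \<open>\<not> r \<le> dH \<xi> \<eta>\<close> by simp
    have g0: "gauge v \<ge> 0" by (rule gauge_nonneg)
    have eta: "\<eta> = hmult \<xi> v" by (simp add: v_def)
    have n1: "norm (fst v) \<le> gauge v" using norm_le_gauge[of "fst v" "snd v"] by simp
    have n2: "\<bar>snd v\<bar> \<le> gauge v" 
    proof -
      have "\<bar>snd v\<bar> \<le> gauge v ^ 2" using abs_le_gauge2[of "snd v" "fst v"] by simp
      also have "\<dots> \<le> gauge v" using g r g0 by (simp add: power2_eq_square mult_left_le_one_le)
      finally show ?thesis .
    qed
    have n3: "\<bar>inner (J z) (fst v)\<bar> \<le> norm z * gauge v"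
    proof -
      have "\<bar>inner (J z) (fst v)\<bar> \<le> norm z * norm (fst v)"
        using Cauchy_Schwarz_ineq2[of "J z" "fst v"] by simp
      also have "\<dots> \<le> norm z * gauge v" using n1 by (rule mult_left_mono) simp
      finally show ?thesis .
    qed
    have "\<eta> - \<xi> = (fst v, snd v + 2 * inner (J z) (fst v))"
      by (simp add: eta hmult_alt z_def prod_eq_iff)
    then have "dist \<eta> \<xi> = norm (fst v, snd v + 2 * inner (J z) (fst v))"
      by (simp add: dist_norm)
    also have "\<dots> \<le> norm (fst v) + norm (snd v + 2 * inner (J z) (fst v))"
      by (rule norm_Pair_le)
    also have "\<dots> \<le> gauge v * (2 + 2 * norm z)" using n1 n2 n3 by (simp add: algebra_simps)
    also have "\<dots> \<le> r * (2 + 2 * norm z)"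
      using g g0 by (intro mult_right_mono) auto
    also have "\<dots> < r * (3 + 2 * norm z)"
      using r by (intro mult_strict_left_mono) auto
    finally have "dist \<eta> \<xi> < e" using r by linarith
    then show False using e(2) that by blast
  qed
  then have "r \<le> distH \<xi> (frontier \<Omega>)"
    unfolding distH_def using assms(3) by (intro cINF_greatest) auto
  then show ?thesis using r by linarith
qed



lemma inner_hmult: "inner c (hmult \<xi> v) = inner c \<xi> + inner (fst c + (2 * snd c) *\<^sub>R J (fst \<xi>)) (fst v) + snd c * snd v"
  by (simp add: hmult_alt inner_prod_def inner_add_left inner_add_right algebra_simps)

lemma const_ge: "(1.8::real) \<le> 97 powr (1/4) / 2 + 1/3"
proof -
  have "(81::real) powr (1/4) = 3"
  proof -
    have "(81::real) = 3 powr (4::real)" by simp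
    then have "(81::real) powr (1/4) = (3 powr (4::real)) powr (1/4)" by simp
    also have "\<dots> = 3 powr (4 * (1/4))" by (rule powr_powr)
    finally show ?thesis by simp
  qed
  moreover have "(81::real) powr (1/4) \<le> 97 powr (1/4)" by (intro powr_mono2) auto
  ultimately show ?thesis by simp
qed

lemma not_univ:
  assumes "horiz_bounded (\<Omega> :: 'n::finite heis set)"
  shows "\<Omega> \<noteq> UNIV"
proof
  assume U: "\<Omega> = UNIV"
  obtain C where C: "\<forall>\<xi>\<in>\<Omega>. \<forall>a\<in>\<Omega> \<inter> hplane \<xi>. \<forall>b\<in>\<Omega> \<inter> hplane \<xi>. dH a b \<le> C"
    using assms unfolding horiz_bounded_def by blast
  obtain u :: "complex^'n" where u: "norm u = \<bar>C\<bar> + 1" using vector_choose_size[of "\<bar>C\<bar> + 1"] by auto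
  define \<xi> :: "'n heis" where "\<xi> = (0, 0)"
  have "hmult \<xi> (u, 0) \<in> hplane \<xi>" "hmult \<xi> (0, 0) \<in> hplane \<xi>" by (rule hplane_horiz)+
  then have "dH (hmult \<xi> (u, 0)) \<xi> \<le> C" using C U by (metis IntI UNIV_I hmult_zero_right)
  moreover have "dH (hmult \<xi> (u, 0)) \<xi> = \<bar>C\<bar> + 1" by (simp add: dH_left gauge_horiz u)
  ultimately show False by linarith
qed



theorem proposition4p4:
  fixes \<Omega> :: "'n::finite heis set"
  assumes "open \<Omega>" and "horiz_bounded \<Omega>" and "convex \<Omega>"
  shows "\<forall>\<xi>\<in>\<Omega>. Dfun \<Omega> \<xi> \<le> (97 powr (1/4) / 2 + 1/3) * distH \<xi> (frontier \<Omega>)"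
proof
  fix \<xi> assume xi: "\<xi> \<in> \<Omega>"
  define F where "F = frontier \<Omega>"
  define \<delta> where "\<delta> = distH \<xi> F"
  have FU: "F \<noteq> {}" unfolding F_def
    using frontier_not_empty[of \<Omega>] not_univ[OF assms(2)] xi by blast
  have dpos: "\<delta> > 0" unfolding \<delta>_def F_def using dist_pos[OF assms(1) xi] FU F_def by blast
  have bddF: "bdd_below ((dH \<xi>) ` F)"
    by (rule bdd_belowI2[of _ 0]) (simp add: dH_def gauge_nonneg)
  have lowF: "\<delta> \<le> dH \<xi> x" if "x \<in> F" for x
    unfolding \<delta>_def distH_def using bddF that by (rule cINF_lower)
  have "Inf ((dH \<xi>) ` F) < 101/100 * \<delta>" using dpos by (simp add: \<delta>_def distH_def)
  then have "\<exists>y\<in>(dH \<xi>) ` F. y < 101/100 * \<delta>"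
    using cInf_lessD[of "(dH \<xi>) ` F"] FU by blast
  then obtain \<eta> where eta: "\<eta> \<in> F" "dH \<xi> \<eta> < 101/100 * \<delta>" by blast
  have etaO: "\<eta> \<notin> \<Omega>" using eta assms(1) by (simp add: F_def frontier_def interior_open)
  obtain c \<beta> where c: "c \<noteq> 0" "\<forall>x\<in>\<Omega>. inner c x \<le> \<beta>" "\<forall>x\<in>{\<eta>}. inner c x \<ge> \<beta>"
    using separating_hyperplane_sets[OF assms(3) convex_singleton, of \<eta>] xi etaO by auto
  have sep: "inner c x < \<beta>" if "x \<in> \<Omega>" for x
    using strict_sep[OF assms(1) that c(1)] c(2) by blast
  define a where "a = fst c"
  define b where "b = snd c"
  define aa where "aa = a + (2 * b) *\<^sub>R J (fst \<xi>)"
  have ih: "inner c (hmult \<xi> v) = inner c \<xi> + inner aa (fst v) + b * snd v" for v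
    by (simp add: inner_hmult aa_def a_def b_def)
  obtain e where e: "norm e = 1" "inner aa e = norm aa"
  proof (cases "aa = 0")
    case True
    obtain e :: "complex^'n" where "norm e = 1" using vector_choose_size[of 1] by auto
    then show ?thesis using that True by simp
  next
    case False
    show ?thesis
      by (rule that[of "aa /\<^sub>R norm aa"])
         (use False in \<open>simp_all add: power2_norm_eq_inner[symmetric] power2_eq_square\<close>)
  qed
  have atJe: "inner aa (J e) = 0"
  proof (cases "aa = 0")
    case False
    have "aa = norm aa *\<^sub>R e"
    proof -
      have h1: "inner aa aa = norm aa * norm aa" by (simp add: power2_norm_eq_inner[symmetric] power2_eq_square)
      have h2: "inner e e = 1" using e(1) by (simp add: power2_norm_eq_inner[symmetric])
      have "inner (aa - norm aa *\<^sub>R e) (aa - norm aa *\<^sub>R e) = 0"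
        by (simp add: inner_diff_left inner_diff_right inner_commute[of e aa] h1 h2 e(2))
      then have "aa - norm aa *\<^sub>R e = 0" by simp
      then show ?thesis by simp
    qed
    then have "inner aa (J e) = norm aa * inner e (J e)" by (metis inner_scaleR_left)
    then show ?thesis by simp
  qed simp
  define \<sigma> :: real where "\<sigma> = (if b \<ge> 0 then 1 else -1)"
  have sb: "\<sigma> * b = \<bar>b\<bar>" "\<bar>\<sigma>\<bar> = 1" by (auto simp: \<sigma>_def)
  define \<rho> where "\<rho> = 3/10 * \<delta>"
  define z0 where "z0 = (- (\<sigma> * \<rho>)) *\<^sub>R J e"
  define \<zeta> where "\<zeta> = hmult \<xi> (z0, 0)"
  have nz0: "norm z0 = \<rho>" using e sb dpos by (simp add: z0_def \<rho>_def abs_mult)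
  have dz: "dH \<zeta> \<xi> = \<rho>" by (simp add: \<zeta>_def dH_left gauge_horiz nz0)
  have zball: "\<zeta> \<in> closure (ballH \<xi> (\<delta> / 3))"
    using dz dpos closure_subset by (force simp: ballH_def \<rho>_def)
  have zO: "\<zeta> \<in> \<Omega>"
  proof (rule ccontr)
    assume "\<zeta> \<notin> \<Omega>"
    then obtain x where "x \<in> F" "dH \<xi> x \<le> \<rho>" using ball_in[OF xi \<open>\<zeta> \<notin> \<Omega>\<close>] dz unfolding F_def by metis
    then show False using lowF[of x] dpos unfolding \<rho>_def by linarith
  qed
  define g where "g = norm aa + 2 * \<bar>b\<bar> * \<rho>"
  have gpos: "g > 0"
  proof -
    have "g \<noteq> 0"
    proof
      assume "g = 0"
      then have "aa = 0" "b = 0" using dpos by (auto simp: g_def \<rho>_def add_nonneg_eq_0_iff)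
      then have "c = 0" by (simp add: aa_def a_def b_def prod_eq_iff)
      then show False using c(1) by simp
    qed
    moreover have "g \<ge> 0" using dpos by (simp add: g_def \<rho>_def)
    ultimately show ?thesis by linarith
  qed
  define q where "q = (\<lambda>s::real. hmult \<zeta> (s *\<^sub>R e, 0))"
  have qalt: "q s = hmult \<xi> (z0 + s *\<^sub>R e, 2 * s * inner (J z0) e)" for s
    by (simp add: q_def \<zeta>_def hmult_alt algebra_simps)
  have iq: "inner c (q s) = inner c \<xi> + s * g" for s
  proof -
    have "inner (J z0) e = \<sigma> * \<rho>" using e by (simp add: z0_def power2_norm_eq_inner[symmetric])
    moreover have "inner aa z0 = 0" by (simp add: z0_def atJe)
    ultimately show ?thesis using e(2) sb
      by (simp add: qalt ih g_def inner_add_right algebra_simps)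
  qed
  define s1 where "s1 = (\<beta> - inner c \<xi>) / g"
  have s1pos: "s1 \<ge> 0" using sep[OF xi] gpos by (simp add: s1_def)
  have "inner c (q s1) = \<beta>" using gpos by (simp add: iq s1_def)
  then have "q s1 \<notin> \<Omega>" using sep by (metis less_irrefl)
  moreover have "q 0 \<in> \<Omega>" using zO by (simp add: q_def)
  moreover have "continuous_on {0..s1} q" unfolding q_def hmult_alt by (intro continuous_intros)
  ultimately obtain s' where s': "s' \<in> {0..s1}" "q s' \<in> F"
    using exit_point[of s1 q \<Omega>] s1pos by (auto simp: F_def)
  have "q s' \<in> F \<inter> hplane \<zeta>" using s' hplane_horiz[of \<zeta> "s' *\<^sub>R e"] by (simp add: q_def)
  moreover have "bdd_below ((dH \<zeta>) ` (F \<inter> hplane \<zeta>))"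
    by (rule bdd_belowI2[of _ 0]) (simp add: dH_def gauge_nonneg)
  ultimately have "distH \<zeta> (F \<inter> hplane \<zeta>) \<le> dH \<zeta> (q s')"
    unfolding distH_def by (meson cINF_lower)
  also have "dH \<zeta> (q s') = s'"
    unfolding dH_sym[of \<zeta> "q s'"] using s' e by (simp add: q_def dH_left gauge_horiz)
  also have "s' \<le> s1" using s' by simp
  also have "s1 \<le> 18/10 * \<delta>"
  proof -
    define v where "v = hmult (hinv \<xi>) \<eta>"
    have etav: "\<eta> = hmult \<xi> v" by (simp add: v_def)
    have "dH \<xi> \<eta> = gauge v" unfolding dH_sym[of \<xi> \<eta>] by (simp add: v_def dH_def)
    then have gv: "gauge v < 101/100 * \<delta>" using eta by simp
    have g0: "gauge v \<ge> 0" by (rule gauge_nonneg)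
    have n1: "norm (fst v) \<le> gauge v" using norm_le_gauge[of "fst v" "snd v"] by simp
    have n2: "\<bar>snd v\<bar> \<le> gauge v ^ 2" using abs_le_gauge2[of "snd v" "fst v"] by simp
    have "\<beta> - inner c \<xi> \<le> inner c \<eta> - inner c \<xi>" using c(3) by simp
    also have "\<dots> = inner aa (fst v) + b * snd v" by (simp add: etav ih)
    also have "\<dots> \<le> norm aa * norm (fst v) + \<bar>b\<bar> * \<bar>snd v\<bar>"
    proof (rule add_mono)
      show "inner aa (fst v) \<le> norm aa * norm (fst v)" by (rule norm_cauchy_schwarz)
      have "b * snd v \<le> \<bar>b * snd v\<bar>" by (rule abs_ge_self)
      then show "b * snd v \<le> \<bar>b\<bar> * \<bar>snd v\<bar>" by (simp add: abs_mult)
    qed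
    also have "\<dots> \<le> norm aa * (18/10 * \<delta>) + \<bar>b\<bar> * (108/100 * \<delta>^2)"
    proof (intro add_mono mult_left_mono)
      show "norm (fst v) \<le> 18/10 * \<delta>" using n1 gv dpos by linarith
      have "gauge v ^ 2 \<le> (101/100 * \<delta>)^2" using gv g0 by (intro power_mono) auto
      moreover have "(101/100 * \<delta>)^2 = 10201/10000 * \<delta>^2" by (simp add: power2_eq_square)
      moreover have "\<delta>^2 \<ge> 0" by simp
      ultimately show "\<bar>snd v\<bar> \<le> 108/100 * \<delta>^2" using n2 by linarith
    qed auto
    also have "\<dots> \<le> 18/10 * \<delta> * g"
      using dpos by (simp add: g_def \<rho>_def algebra_simps power2_eq_square)
    finally show ?thesis using gpos by (simp add: s1_def divide_le_eq)
  qed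
  also have "\<dots> \<le> (97 powr (1/4) / 2 + 1/3) * \<delta>" using const_ge dpos by (intro mult_right_mono) auto
  finally have main: "distH \<zeta> (F \<inter> hplane \<zeta>) \<le> (97 powr (1/4) / 2 + 1/3) * \<delta>" .
  have bddD: "bdd_below ((\<lambda>\<zeta>. distH \<zeta> (F \<inter> hplane \<zeta>)) ` closure (ballH \<xi> (distH \<xi> F / 3)))"
  proof (rule bdd_belowI2[of _ "min 0 (Inf {})"])
    fix z
    show "min 0 (Inf {}) \<le> distH z (F \<inter> hplane z)"
    proof (cases "F \<inter> hplane z = {}")
      case True then show ?thesis by (simp add: distH_def)
    next
      case False
      have "0 \<le> distH z (F \<inter> hplane z)"
        unfolding distH_def using False by (intro cINF_greatest) (auto simp: dH_def gauge_nonneg)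
      then show ?thesis by simp
    qed
  qed
  have "Dfun \<Omega> \<xi> \<le> distH \<zeta> (F \<inter> hplane \<zeta>)"
    unfolding Dfun_def F_def[symmetric] using bddD zball by (intro cINF_lower) (auto simp: \<delta>_def)
  then show "Dfun \<Omega> \<xi> \<le> (97 powr (1/4) / 2 + 1/3) * distH \<xi> (frontier \<Omega>)"
    using main by (simp add: \<delta>_def F_def)
qed


end
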